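(* Let $n$ be a positive integer and $k$ an integer with $1<k<n$ and $\gcd(k,n)=1$. If $n$ is odd, there is at most one quasigroup operation on $\{1,2,\dots,n\}$ that is idempotent and $k$-translatable with respect to the ordering $1,2,\dots,n$. If $n$ is even, there is no such quasigroup.
   Context: A groupoid on $\{1,\dots,n\}$ is $k$-translatable with respect to the ordering $1,\dots,n$ if $i\cdot j=(i-1)\cdot(j-k)$ for all $i\in\{2,\dots,n\}$, $j\in\{1,\dots,n\}$, where $j-k$ is taken modulo $n$ in $\{1,\dots,n\}$ (each Cayley-table row is the previous row with its last $k$ entries moved to the front). Idempotent means $x\cdot x=x$ for all $x$. *)

theory Defs
  imports Main
begin

text \<open>Groupoids on the carrier {1..n} are modelled as binary operations
  on nat, considered only on {1..n}.\<close>

definition closed_op :: "nat \<Rightarrow> (nat \<Rightarrow> nat \<Rightarrow> nat) \<Rightarrow> bool" where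
  "closed_op n f \<longleftrightarrow> (\<forall>a\<in>{1..n}. \<forall>b\<in>{1..n}. f a b \<in> {1..n})"

definition is_quasigroup :: "nat \<Rightarrow> (nat \<Rightarrow> nat \<Rightarrow> nat) \<Rightarrow> bool" where
  "is_quasigroup n f \<longleftrightarrow> closed_op n f \<and>
     (\<forall>a\<in>{1..n}. \<forall>b\<in>{1..n}. (\<exists>!x. x \<in> {1..n} \<and> f a x = b) \<and> (\<exists>!y. y \<in> {1..n} \<and> f y a = b))"

definition is_idempotent :: "nat \<Rightarrow> (nat \<Rightarrow> nat \<Rightarrow> nat) \<Rightarrow> bool" where
  "is_idempotent n f \<longleftrightarrow> (\<forall>x\<in>{1..n}. f x x = x)"

definition mod1 :: "nat \<Rightarrow> int \<Rightarrow> nat" where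
  "mod1 n m = nat ((m - 1) mod int n) + 1"

definition k_translatable :: "nat \<Rightarrow> nat \<Rightarrow> (nat \<Rightarrow> nat \<Rightarrow> nat) \<Rightarrow> bool" where
  "k_translatable n k f \<longleftrightarrow>
     (\<forall>i\<in>{2..n}. \<forall>j\<in>{1..n}. f i j = f (i - 1) (mod1 n (int j - int k)))"

end

theory Submission
  imports Defs
begin

lemma mod1_range: "0 < n \<Longrightarrow> mod1 n m \<in> {1..n}"
proof -
  assume n: "0 < n"
  have "(m - 1) mod int n < int n" "0 \<le> (m - 1) mod int n" using n by simp_all
  then show ?thesis unfolding mod1_def by auto
qed

lemma mod1_id: "b \<in> {1..n} \<Longrightarrow> mod1 n (int b) = b"
  unfolding mod1_def by (auto simp: mod_pos_pos_trivial)

lemma mod1_int: "0 < n \<Longrightarrow> int (mod1 n x) mod int n = x mod int n"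
proof -
  assume n: "0 < n"
  have "int (mod1 n x) = (x - 1) mod int n + 1"
    unfolding mod1_def using n by simp
  then show ?thesis by (simp add: mod_add_left_eq)
qed

lemma mod1_eq: "0 < n \<Longrightarrow> x mod int n = y mod int n \<Longrightarrow> mod1 n x = mod1 n y"
  unfolding mod1_def by (metis mod_diff_left_eq)

lemma row:
  assumes n: "0 < n" and t: "k_translatable n k f"
  shows "a \<in> {1..n} \<Longrightarrow> \<forall>b\<in>{1..n}. f a b = f 1 (mod1 n (int b - (int a - 1) * int k))"
proof (induction a)
  case 0 then show ?case by simp
next
  case (Suc a)
  show ?case
  proof (cases "a = 0")
    case True then show ?thesis by (simp add: mod1_id)
  next
    case False
    show ?thesis
    proof
      fix b assume b: "b \<in> {1..n}"
      define b' where "b' = mod1 n (int b - int k)"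
      have b': "b' \<in> {1..n}" unfolding b'_def using mod1_range n by blast
      have "f (Suc a) b = f a b'" using t Suc.prems b False unfolding k_translatable_def b'_def by auto
      also have "\<dots> = f 1 (mod1 n (int b' - (int a - 1) * int k))"
        using Suc.IH Suc.prems False b' by auto
      also have "\<dots> = f 1 (mod1 n (int b - (int (Suc a) - 1) * int k))"
      proof -
        have "(int b' - (int a - 1) * int k) mod int n = (int b - int k - (int a - 1) * int k) mod int n"
          using mod1_int[OF n, of "int b - int k"] unfolding b'_def by (metis mod_diff_left_eq)
        then show ?thesis by (intro arg_cong[where f="f 1"] mod1_eq[OF n]) (simp add: algebra_simps)
      qed
      finally show "f (Suc a) b = f 1 (mod1 n (int b - (int (Suc a) - 1) * int k))" .
    qed
  qed
qed

definition hh :: "nat \<Rightarrow> nat \<Rightarrow> nat \<Rightarrow> nat" where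
  "hh n k a = mod1 n (int a - (int a - 1) * int k)"

lemma diag:
  assumes n: "0 < n" and t: "k_translatable n k f" and i: "is_idempotent n f" and a: "a \<in> {1..n}"
  shows "f 1 (hh n k a) = a"
proof -
  have "f a a = a" using a i unfolding is_idempotent_def by auto
  moreover have "f a a = f 1 (hh n k a)" using row[OF n t a] a unfolding hh_def by blast
  ultimately show ?thesis by simp
qed

lemma hh_inj:
  assumes n: "0 < n" and t: "k_translatable n k f" and i: "is_idempotent n f"
  shows "inj_on (hh n k) {1..n}"
  by (metis diag[OF n t i] inj_onI)

lemma hh_surj:
  assumes n: "0 < n" and t: "k_translatable n k f" and i: "is_idempotent n f"
  shows "hh n k ` {1..n} = {1..n}"
proof -
  have sub: "hh n k ` {1..n} \<subseteq> {1..n}" unfolding hh_def using mod1_range[OF n] by auto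
  have "card (hh n k ` {1..n}) = card {1..n}" using card_image[OF hh_inj[OF n t i]] .
  then show ?thesis using sub by (simp add: card_subset_eq)
qed

theorem theorem8p9:
  fixes n k :: nat
  assumes "0 < n" and "1 < k" and "k < n" and "gcd k n = 1"
  shows "(odd n \<longrightarrow> (\<forall>f g. is_quasigroup n f \<and> is_idempotent n f \<and> k_translatable n k f \<and>
                              is_quasigroup n g \<and> is_idempotent n g \<and> k_translatable n k g \<longrightarrow>
                              (\<forall>a\<in>{1..n}. \<forall>b\<in>{1..n}. f a b = g a b)))
       \<and> (even n \<longrightarrow> \<not> (\<exists>f. is_quasigroup n f \<and> is_idempotent n f \<and> k_translatable n k f))"
proof (intro conjI impI allI ballI)
  fix f g a b
  assume H: "is_quasigroup n f \<and> is_idempotent n f \<and> k_translatable n k f \<and>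
             is_quasigroup n g \<and> is_idempotent n g \<and> k_translatable n k g"
    and a: "a \<in> {1..n}" and b: "b \<in> {1..n}"
  have row1: "f 1 c = g 1 c" if c: "c \<in> {1..n}" for c
  proof -
    obtain x where x: "x \<in> {1..n}" "c = hh n k x" using hh_surj[OF assms(1)] H c by blast
    show ?thesis using diag[OF assms(1) _ _ x(1), of k f] diag[OF assms(1) _ _ x(1), of k g] H x by simp
  qed
  show "f a b = g a b"
    using row[OF assms(1) _ a, of k f] row[OF assms(1) _ a, of k g] H b row1 mod1_range[OF assms(1)]
    by auto
next
  assume ev: "even n"
  show "\<not> (\<exists>f. is_quasigroup n f \<and> is_idempotent n f \<and> k_translatable n k f)"
  proof
    assume "\<exists>f. is_quasigroup n f \<and> is_idempotent n f \<and> k_translatable n k f"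
    then obtain f where i: "is_idempotent n f" and t: "k_translatable n k f" by blast
    obtain m where m: "n = 2 * m" using ev by blast
    have m0: "0 < m" using m assms(1) by simp
    have ko: "odd k"
    proof
      assume "even k"
      then have "2 dvd gcd k n" using ev by simp
      then show False using assms(4) by simp
    qed
    obtain j where j: "k = 2 * j + 1" using ko oddE by blast
    have "hh n k 1 = hh n k (1 + m)"
      unfolding hh_def
    proof (rule mod1_eq[OF assms(1)])
      have "int (1 + m) - (int (1 + m) - 1) * int k = 1 + int m - int m * (2 * int j + 1)"
        using j by simp
      also have "\<dots> = 1 - int n * int j" using m by (simp add: algebra_simps)
      finally have e: "int (1 + m) - (int (1 + m) - 1) * int k = 1 + (- int j) * int n" by simp
      show "(int 1 - (int 1 - 1) * int k) mod int n = (int (1 + m) - (int (1 + m) - 1) * int k) mod int n"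
      proof -
        have "(1 + (- int j) * int n) mod int n = 1 mod int n" by (rule mod_mult_self1)
        then show ?thesis unfolding e by simp
      qed
    qed
    moreover have "1 \<in> {1..n}" "1 + m \<in> {1..n}" using m m0 by auto
    ultimately show False using inj_onD[OF hh_inj[OF assms(1) t i]] m0 by fastforce
  qed
qed

end
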